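(* Let $(U,<)$ be a linear order and $\bar u=(u_\beta)_{\beta<\alpha}$ a sequence of elements of $U$. Then $\bar u$ is densely non-increasing if and only if for all ordinals $\beta'<\beta<\alpha$ the following two statements hold: (i) if $\beta=\beta'+1$ then $u_{\beta'}\ge u_\beta$; (ii) if $\beta$ is a limit ordinal and $\bar u$ is constant on $[\beta',\beta)$, then $u_{\beta'}\ge u_\beta$.
   Context: A sequence $(u_\beta)_{\beta<\alpha}$ (indexed by a countable ordinal $\alpha$) is constant on $[\gamma,\gamma')$ if $u_\beta=u_\gamma$ for all $\gamma\le\beta<\gamma'$. It is densely non-increasing if for all $\gamma<\gamma'\le\alpha$, either it is constant on $[\gamma,\gamma')$ or there exist $\gamma\le\beta<\beta'<\gamma'$ with $u_\beta>u_{\beta'}$. *)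

theory Defs
  imports Main "HOL-Library.Countable_Set"
begin

text \<open>Ordinals below alpha are modelled as the initial segment {b. b < a} of a
well-ordered type 'i; the sequence is u restricted to that segment.\<close>

definition constant_on_seg :: "('i::wellorder \<Rightarrow> 'u) \<Rightarrow> 'i \<Rightarrow> 'i \<Rightarrow> bool" where
  "constant_on_seg u g g' \<longleftrightarrow> (\<forall>b. g \<le> b \<and> b < g' \<longrightarrow> u b = u g)"

definition densely_nonincreasing :: "('i::wellorder \<Rightarrow> 'u::linorder) \<Rightarrow> 'i \<Rightarrow> bool" where
  "densely_nonincreasing u a \<longleftrightarrow>
     (\<forall>g g'. g < g' \<and> g' \<le> a \<longrightarrow>
        constant_on_seg u g g' \<or> (\<exists>b b'. g \<le> b \<and> b < b' \<and> b' < g' \<and> u b > u b'))"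

definition is_succ_of :: "'i::wellorder \<Rightarrow> 'i \<Rightarrow> bool" where
  "is_succ_of b' b \<longleftrightarrow> b' < b \<and> \<not> (\<exists>z. b' < z \<and> z < b)"

definition is_limit :: "'i::wellorder \<Rightarrow> bool" where
  "is_limit b \<longleftrightarrow> (\<exists>x. x < b) \<and> (\<forall>x. x < b \<longrightarrow> (\<exists>z. x < z \<and> z < b))"

end

theory Submission
  imports Defs
begin

lemma succ_exists:
  fixes b a :: "'i::wellorder"
  assumes "b < a"
  obtains s where "b < s" "s \<le> a" "\<And>x. b < x \<Longrightarrow> s \<le> x"
proof -
  let ?s = "LEAST z. b < z"
  have "b < ?s" using assms by (rule LeastI)
  moreover have "?s \<le> a" using assms by (rule Least_le)
  moreover have "\<And>x. b < x \<Longrightarrow> ?s \<le> x" by (rule Least_le)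
  ultimately show ?thesis using that by blast
qed

theorem mainTheorem6:
  fixes u :: "'i::wellorder \<Rightarrow> 'u::linorder" and a :: 'i
  assumes "countable {b. b < a}"
  shows "densely_nonincreasing u a \<longleftrightarrow>
    (\<forall>b' b. b' < b \<and> b < a \<longrightarrow>
       (is_succ_of b' b \<longrightarrow> u b' \<ge> u b) \<and>
       (is_limit b \<and> constant_on_seg u b' b \<longrightarrow> u b' \<ge> u b))"
proof
  assume DN: "densely_nonincreasing u a"
  show "\<forall>b' b. b' < b \<and> b < a \<longrightarrow>
       (is_succ_of b' b \<longrightarrow> u b' \<ge> u b) \<and>
       (is_limit b \<and> constant_on_seg u b' b \<longrightarrow> u b' \<ge> u b)"
  proof (intro allI impI conjI)
    fix b' b assume h: "b' < b \<and> b < a"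
    then obtain s where s: "b < s" "s \<le> a" "\<And>x. b < x \<Longrightarrow> s \<le> x"
      using succ_exists by blast
    have le: "x < s \<Longrightarrow> x \<le> b" for x
    proof (rule ccontr)
      assume "x < s" "\<not> x \<le> b"
      then have "b < x" by simp
      then have "s \<le> x" by (rule s(3))
      then show False using \<open>x < s\<close> by simp
    qed
    have D0: "\<forall>g g'. g < g' \<and> g' \<le> a \<longrightarrow>
        constant_on_seg u g g' \<or> (\<exists>b b'. g \<le> b \<and> b < b' \<and> b' < g' \<and> u b > u b')"
      using DN unfolding densely_nonincreasing_def .
    have bs: "b' < s" using h s(1) by (meson less_trans)
    have D: "constant_on_seg u b' s \<or> (\<exists>b1 b2. b' \<le> b1 \<and> b1 < b2 \<and> b2 < s \<and> u b1 > u b2)"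
      using D0[rule_format, of b' s] bs s(2) by simp
    {
      assume sc: "is_succ_of b' b"
      show "u b' \<ge> u b"
        using D
      proof
        assume c: "constant_on_seg u b' s"
        have "b' \<le> b" using h less_imp_le by blast
        then have "u b = u b'" using c s(1) unfolding constant_on_seg_def by blast
        then show ?thesis by simp
      next
        assume "\<exists>b1 b2. b' \<le> b1 \<and> b1 < b2 \<and> b2 < s \<and> u b1 > u b2"
        then obtain b1 b2 where q: "b' \<le> b1" "b1 < b2" "b2 < s" "u b1 > u b2" by blast
        have "b2 \<le> b" using le q by auto
        have "b1 < b" using q(2) \<open>b2 \<le> b\<close> by (rule less_le_trans)
        have nz: "\<not> (b' < z \<and> z < b)" for z using sc unfolding is_succ_of_def by blast
        have "b1 = b'"
        proof (rule ccontr)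
          assume "b1 \<noteq> b'" then have "b' < b1" using q(1) by simp
          then show False using nz[of b1] \<open>b1 < b\<close> by simp
        qed
        moreover have "b2 = b"
        proof (rule ccontr)
          assume "b2 \<noteq> b" then have "b2 < b" using \<open>b2 \<le> b\<close> by simp
          moreover have "b' < b2" using q(1,2) by simp
          ultimately show False using nz[of b2] by simp
        qed
        ultimately show ?thesis using q by auto
      qed
    }
    {
      assume lc: "is_limit b \<and> constant_on_seg u b' b"
      show "u b' \<ge> u b"
        using D
      proof
        assume c: "constant_on_seg u b' s"
        have "b' \<le> b" using h less_imp_le by blast
        then have "u b = u b'" using c s(1) unfolding constant_on_seg_def by blast
        then show ?thesis by simp
      next
        assume "\<exists>b1 b2. b' \<le> b1 \<and> b1 < b2 \<and> b2 < s \<and> u b1 > u b2"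
        then obtain b1 b2 where q: "b' \<le> b1" "b1 < b2" "b2 < s" "u b1 > u b2" by blast
        have "b2 \<le> b" using le q by auto
        show ?thesis
        proof (cases "b2 = b")
          case True
          have "b1 < b" using q(2) True by simp
          then have "u b1 = u b'" using lc q(1) unfolding constant_on_seg_def by blast
          then show ?thesis using q(4) True by simp
        next
          case False
          then have "b2 < b" using \<open>b2 \<le> b\<close> by (simp add: le_less)
          have "b1 < b" using q(2) \<open>b2 < b\<close> by (rule less_trans)
          have "b' \<le> b2" using q(1,2) by (meson less_imp_le order_trans)
          have "u b1 = u b'" using lc q(1) \<open>b1 < b\<close> unfolding constant_on_seg_def by blast
          moreover have "u b2 = u b'" using lc \<open>b' \<le> b2\<close> \<open>b2 < b\<close> unfolding constant_on_seg_def by blast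
          ultimately show ?thesis using q(4) by simp
        qed
      qed
    }
  qed
next
  assume R: "\<forall>b' b. b' < b \<and> b < a \<longrightarrow>
       (is_succ_of b' b \<longrightarrow> u b' \<ge> u b) \<and>
       (is_limit b \<and> constant_on_seg u b' b \<longrightarrow> u b' \<ge> u b)"
  show "densely_nonincreasing u a"
    unfolding densely_nonincreasing_def
  proof (intro allI impI)
    fix g g' :: 'i assume gg: "g < g' \<and> g' \<le> a"
    show "constant_on_seg u g g' \<or> (\<exists>b b'. g \<le> b \<and> b < b' \<and> b' < g' \<and> u b > u b')"
    proof (rule ccontr)
      assume NT: "\<not> ?thesis"
      then have nc: "\<not> constant_on_seg u g g'" by blast
      have mono: "u x \<le> u y" if "g \<le> x" "x < y" "y < g'" for x y
      proof (rule ccontr)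
        assume "\<not> u x \<le> u y" then have "u x > u y" by (simp add: not_le)
        then show False using NT that by blast
      qed
      obtain b where b: "g \<le> b" "b < g'" "u b \<noteq> u g" using nc unfolding constant_on_seg_def by blast
      have "g \<noteq> b" using b(3) by blast
      then have "g < b" using b(1) by (simp add: le_less)
      then have "u g \<le> u b" using mono[of g b] b(2) by blast
      then have "u b > u g" using b(3) by (simp add: le_less)
      define P where "P x \<longleftrightarrow> g \<le> x \<and> x < g' \<and> u x > u g" for x
      have Pb: "P b" using b \<open>u b > u g\<close> P_def by blast
      define b0 where "b0 = (LEAST x. P x)"
      have P0: "P b0" unfolding b0_def using Pb by (rule LeastI)
      have min: "\<And>x. P x \<Longrightarrow> b0 \<le> x" unfolding b0_def by (rule Least_le)
      have "g \<le> b0" "b0 < g'" "u b0 > u g" using P0 unfolding P_def by blast+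
      have "g \<noteq> b0" using \<open>u b0 > u g\<close> by blast
      then have gb0: "g < b0" using \<open>g \<le> b0\<close> by (simp add: le_less)
      have eq: "u x = u g" if x: "g \<le> x" "x < b0" for x
      proof -
        have "x < g'" using x(2) \<open>b0 < g'\<close> by (rule less_trans)
        have "\<not> P x" using min[of x] x(2) by (meson not_le)
        then have "u x \<le> u g" using x(1) \<open>x < g'\<close> unfolding P_def by (meson not_le)
        moreover have "u g \<le> u x"
        proof (cases "g = x")
          case True then show ?thesis by simp
        next
          case False then have "g < x" using x(1) by (simp add: le_less)
          then show ?thesis using mono[of g x] \<open>x < g'\<close> by blast
        qed
        ultimately show "u x = u g" by (rule antisym)
      qed
      have b0a: "b0 < a" using \<open>b0 < g'\<close> gg by (meson less_le_trans)
      show False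
      proof (cases "is_limit b0")
        case True
        have "constant_on_seg u g b0" unfolding constant_on_seg_def using eq by blast
        then have "u g \<ge> u b0" using R gb0 b0a True by blast
        then show False using \<open>u b0 > u g\<close> by (simp add: not_le)
      next
        case False
        then obtain x where x: "x < b0" "\<not> (\<exists>z. x < z \<and> z < b0)"
          unfolding is_limit_def using gb0 by blast
        have "g \<le> x"
        proof (rule ccontr)
          assume "\<not> g \<le> x" then have "x < g" by (simp add: not_le)
          then show False using x(2) gb0 by blast
        qed
        have "is_succ_of x b0" using x unfolding is_succ_of_def by blast
        then have "u x \<ge> u b0" using R x(1) b0a by blast
        moreover have "u x = u g" using eq \<open>g \<le> x\<close> x(1) by blast
        ultimately show False using \<open>u b0 > u g\<close> by (simp add: not_le)
      qed
    qed
  qed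
qed

end
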